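(* Let $(X,Y)$ be a random pair with $Y$ real-valued and $\mathbb{E}[Y^2]<\infty$, and let $m^\star(x)=\mathbb{E}[Y\mid X=x]$. Suppose $g^\star(x)=h(m^\star(x))$ for some strictly increasing $h:\mathbb{R}\to\mathbb{R}$. Let $\mathcal{F}$ be the set of nondecreasing functions $f:\mathbb{R}\to\mathbb{R}$, and let $f^\star$ be any minimizer of $\mathbb{E}\big[(Y-f(g^\star(X)))^2\big]$ over $f\in\mathcal{F}$. Then $f^\star(g^\star(X))=m^\star(X)$. *)

theory Defs
  imports "HOL-Probability.Probability"
begin

end

theory Submission
  imports Defs
begin

lemma L2_mult:
  fixes f g :: "'w \<Rightarrow> real"
  assumes [measurable]: "f \<in> borel_measurable M" "g \<in> borel_measurable M"
    and "integrable M (\<lambda>x. (f x)\<^sup>2)" "integrable M (\<lambda>x. (g x)\<^sup>2)"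
  shows "integrable M (\<lambda>x. f x * g x)"
proof (rule Bochner_Integration.integrable_bound[where f="\<lambda>x. (f x)\<^sup>2 + (g x)\<^sup>2"])
  show "integrable M (\<lambda>x. (f x)\<^sup>2 + (g x)\<^sup>2)" using assms by auto
  show "(\<lambda>x. f x * g x) \<in> borel_measurable M" by measurable
  show "AE x in M. norm (f x * g x) \<le> norm ((f x)\<^sup>2 + (g x)\<^sup>2)"
  proof (rule AE_I2)
    fix x
    have "2 * \<bar>f x * g x\<bar> \<le> (f x)\<^sup>2 + (g x)\<^sup>2"
    proof -
      have "0 \<le> (\<bar>f x\<bar> - \<bar>g x\<bar>)\<^sup>2" by simp
      then show ?thesis by (simp add: power2_diff abs_mult)
    qed
    then show "norm (f x * g x) \<le> norm ((f x)\<^sup>2 + (g x)\<^sup>2)"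
      by (smt (verit) real_norm_def zero_le_power2)
  qed
qed

lemma L2_diff:
  fixes f g :: "'w \<Rightarrow> real"
  assumes [measurable]: "f \<in> borel_measurable M" "g \<in> borel_measurable M"
    and "integrable M (\<lambda>x. (f x)\<^sup>2)" "integrable M (\<lambda>x. (g x)\<^sup>2)"
  shows "integrable M (\<lambda>x. (f x - g x)\<^sup>2)"
proof -
  have "integrable M (\<lambda>x. (f x)\<^sup>2 - 2 * (f x * g x) + (g x)\<^sup>2)"
    using L2_mult[OF assms] assms by auto
  moreover have "(\<lambda>x. (f x)\<^sup>2 - 2 * (f x * g x) + (g x)\<^sup>2) = (\<lambda>x. (f x - g x)\<^sup>2)"
    by (auto simp: fun_eq_iff power2_diff)
  ultimately show ?thesis by simp
qed

theorem theorem3: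
  fixes M :: "'w measure" and N :: "'a measure"
    and X :: "'w \<Rightarrow> 'a" and Y :: "'w \<Rightarrow> real"
    and m :: "'a \<Rightarrow> real" and g :: "'a \<Rightarrow> real"
    and h :: "real \<Rightarrow> real" and fstar :: "real \<Rightarrow> real"
  assumes "prob_space M"
    and "X \<in> measurable M N"
    and "Y \<in> borel_measurable M"
    and "integrable M (\<lambda>\<omega>. (Y \<omega>)\<^sup>2)"
    and "m \<in> borel_measurable N"
    and "AE \<omega> in M. m (X \<omega>) = real_cond_exp M (vimage_algebra (space M) X N) Y \<omega>"
    and "strict_mono h"
    and "\<And>x. g x = h (m x)"
    and "mono fstar"
    and "\<And>f::real \<Rightarrow> real. mono f \<Longrightarrow>
           (\<integral>\<^sup>+\<omega>. ennreal ((Y \<omega> - fstar (g (X \<omega>)))\<^sup>2) \<partial>M)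
           \<le> (\<integral>\<^sup>+\<omega>. ennreal ((Y \<omega> - f (g (X \<omega>)))\<^sup>2) \<partial>M)"
  shows "AE \<omega> in M. fstar (g (X \<omega>)) = m (X \<omega>)"
proof -
  interpret P: prob_space M by fact
  define F where "F = vimage_algebra (space M) X N"
  have Xsp: "X \<in> space M \<rightarrow> space N" using assms(2) by (auto dest: measurable_space)
  have XF[measurable]: "X \<in> measurable F N" unfolding F_def by (rule measurable_vimage_algebra1[OF Xsp])
  have subalg: "subalgebra M F" unfolding subalgebra_def F_def
    using assms(2) measurable_iff_sets[of X M N] by auto
  have "finite_measure_subalgebra M F"
    by (simp add: finite_measure_subalgebra_def finite_measure_subalgebra_axioms_def subalg
        P.finite_measure_axioms)
  then interpret S: sigma_finite_subalgebra M F
    by (rule finite_measure_subalgebra_is_sigma_finite)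
  have cond: "AE \<omega> in M. m (X \<omega>) = real_cond_exp M F Y \<omega>" using assms(6) unfolding F_def .
  define Z where "Z = (\<lambda>\<omega>. m (X \<omega>))"
  have [measurable]: "m \<in> borel_measurable N" by fact
  have [measurable]: "Y \<in> borel_measurable M" by fact
  have ZF[measurable]: "Z \<in> borel_measurable F" unfolding Z_def by measurable
  have ZM[measurable]: "Z \<in> borel_measurable M" by (rule measurable_from_subalg[OF subalg ZF])
  have Yint: "integrable M Y" by (rule P.square_integrable_imp_integrable[OF assms(3) assms(4)])
  have "integrable M (\<lambda>\<omega>. (real_cond_exp M F Y \<omega>)\<^sup>2)"
    by (rule S.integrable_convex_cond_exp[where I=UNIV and q="\<lambda>x. x\<^sup>2"])
       (auto simp: Yint assms(4) convex_power_even)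
  moreover have "AE \<omega> in M. (real_cond_exp M F Y \<omega>)\<^sup>2 = (Z \<omega>)\<^sup>2"
    using cond by (auto simp: Z_def)
  ultimately have Z2: "integrable M (\<lambda>\<omega>. (Z \<omega>)\<^sup>2)"
    using integrable_cong_AE[of "\<lambda>\<omega>. (real_cond_exp M F Y \<omega>)\<^sup>2" M "\<lambda>\<omega>. (Z \<omega>)\<^sup>2"] by simp
  define c where "c = (\<integral>\<omega>. (Y \<omega> - Z \<omega>)\<^sup>2 \<partial>M)"
  have pyth: "(\<integral>\<^sup>+\<omega>. ennreal ((Y \<omega> - W \<omega>)\<^sup>2) \<partial>M) = ennreal (c + (\<integral>\<omega>. (Z \<omega> - W \<omega>)\<^sup>2 \<partial>M))"
    if WF[measurable]: "W \<in> borel_measurable F" and W2: "integrable M (\<lambda>\<omega>. (W \<omega>)\<^sup>2)" for W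
  proof -
    have WM[measurable]: "W \<in> borel_measurable M" by (rule measurable_from_subalg[OF subalg WF])
    have ZW2: "integrable M (\<lambda>\<omega>. (Z \<omega> - W \<omega>)\<^sup>2)" by (rule L2_diff[OF ZM WM Z2 W2])
    have YZ2: "integrable M (\<lambda>\<omega>. (Y \<omega> - Z \<omega>)\<^sup>2)" by (rule L2_diff[OF assms(3) ZM assms(4) Z2])
    have YW2: "integrable M (\<lambda>\<omega>. (Y \<omega> - W \<omega>)\<^sup>2)" by (rule L2_diff[OF assms(3) WM assms(4) W2])
    have ZWM[measurable]: "(\<lambda>\<omega>. Z \<omega> - W \<omega>) \<in> borel_measurable M" by measurable
    have ZWF[measurable]: "(\<lambda>\<omega>. Z \<omega> - W \<omega>) \<in> borel_measurable F" by measurable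
    have i1: "integrable M (\<lambda>\<omega>. (Z \<omega> - W \<omega>) * Y \<omega>)"
      by (rule L2_mult[OF ZWM assms(3) ZW2 assms(4)])
    have i2: "integrable M (\<lambda>\<omega>. (Z \<omega> - W \<omega>) * Z \<omega>)"
      by (rule L2_mult[OF ZWM ZM ZW2 Z2])
    have "(\<integral>\<omega>. (Z \<omega> - W \<omega>) * Y \<omega> \<partial>M) = (\<integral>\<omega>. (Z \<omega> - W \<omega>) * real_cond_exp M F Y \<omega> \<partial>M)"
      using S.real_cond_exp_intg(2)[OF i1 ZWF assms(3)] by simp
    also have "\<dots> = (\<integral>\<omega>. (Z \<omega> - W \<omega>) * Z \<omega> \<partial>M)"
      apply (rule integral_cong_AE)
        apply (intro borel_measurable_times ZWM borel_measurable_cond_exp2)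
       apply (intro borel_measurable_times ZWM ZM)
      using cond by (auto simp: Z_def)
    finally have orth: "(\<integral>\<omega>. (Z \<omega> - W \<omega>) * Y \<omega> \<partial>M) = (\<integral>\<omega>. (Z \<omega> - W \<omega>) * Z \<omega> \<partial>M)" .
    have eq: "(\<lambda>\<omega>. (Y \<omega> - W \<omega>)\<^sup>2) = (\<lambda>\<omega>. (Y \<omega> - Z \<omega>)\<^sup>2 + 2 * ((Z \<omega> - W \<omega>) * Y \<omega>)
        - 2 * ((Z \<omega> - W \<omega>) * Z \<omega>) + (Z \<omega> - W \<omega>)\<^sup>2)"
      by (auto simp: fun_eq_iff power2_eq_square algebra_simps)
    have "(\<integral>\<omega>. (Y \<omega> - W \<omega>)\<^sup>2 \<partial>M) = c + (\<integral>\<omega>. (Z \<omega> - W \<omega>)\<^sup>2 \<partial>M)"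
      unfolding eq c_def using YZ2 ZW2 i1 i2 orth by simp
    moreover have "(\<integral>\<^sup>+\<omega>. ennreal ((Y \<omega> - W \<omega>)\<^sup>2) \<partial>M) = ennreal (\<integral>\<omega>. (Y \<omega> - W \<omega>)\<^sup>2 \<partial>M)"
      by (rule nn_integral_eq_integral[OF YW2]) auto
    ultimately show ?thesis by simp
  qed
  define fn :: "nat \<Rightarrow> real \<Rightarrow> real"
    where "fn n t = Sup (insert (- real n) {min (real n) s | s. h s \<le> t})" for n t
  have fn_mono: "mono (fn n)" for n
  proof (rule monoI)
    fix t t' :: real assume "t \<le> t'"
    show "fn n t \<le> fn n t'" unfolding fn_def
    proof (rule cSup_subset_mono)
      show "bdd_above (insert (- real n) {min (real n) s | s. h s \<le> t'})"
        by (rule bdd_aboveI[where M="real n"]) auto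
    qed (use \<open>t \<le> t'\<close> in auto)
  qed
  have fn_h: "fn n (h s) = max (- real n) (min (real n) s)" for n s
    unfolding fn_def
  proof (rule cSup_eq_maximum)
    show "max (- real n) (min (real n) s) \<in> insert (- real n) {min (real n) s' | s'. h s' \<le> h s}"
      by (cases "- real n \<le> min (real n) s") (auto simp: max_def)
    fix x assume "x \<in> insert (- real n) {min (real n) s' | s'. h s' \<le> h s}"
    then show "x \<le> max (- real n) (min (real n) s)"
      using strict_mono_less_eq[OF assms(7)] by auto
  qed
  define Wn where "Wn n \<omega> = max (- real n) (min (real n) (Z \<omega>))" for n \<omega>
  have Wn_eq: "fn n (g (X \<omega>)) = Wn n \<omega>" for n \<omega>
    by (simp add: assms(8) fn_h Wn_def Z_def)
  have WnF: "Wn n \<in> borel_measurable F" for n unfolding Wn_def by measurable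
  have WnM[measurable]: "Wn n \<in> borel_measurable M" for n
    by (rule measurable_from_subalg[OF subalg WnF])
  have Wn_bd: "\<bar>Z \<omega> - Wn n \<omega>\<bar> \<le> \<bar>Z \<omega>\<bar>" "\<bar>Wn n \<omega>\<bar> \<le> \<bar>Z \<omega>\<bar>" for n \<omega>
    unfolding Wn_def by auto
  have Wn2: "integrable M (\<lambda>\<omega>. (Wn n \<omega>)\<^sup>2)" for n
  proof (rule Bochner_Integration.integrable_bound[OF Z2])
    show "AE x in M. norm ((Wn n x)\<^sup>2) \<le> norm ((Z x)\<^sup>2)"
      using Wn_bd(2) by (auto simp: abs_le_square_iff[symmetric])
  qed measurable
  define \<delta> where "\<delta> n = (\<integral>\<omega>. (Z \<omega> - Wn n \<omega>)\<^sup>2 \<partial>M)" for n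
  have Ln: "(\<integral>\<^sup>+\<omega>. ennreal ((Y \<omega> - fn n (g (X \<omega>)))\<^sup>2) \<partial>M) = ennreal (c + \<delta> n)" for n
    unfolding Wn_eq \<delta>_def by (rule pyth[OF WnF Wn2])
  have \<delta>_lim: "\<delta> \<longlonglongrightarrow> 0"
  proof -
    have "(\<lambda>n. \<integral>\<omega>. (Z \<omega> - Wn n \<omega>)\<^sup>2 \<partial>M) \<longlonglongrightarrow> (\<integral>\<omega>. 0 \<partial>M)"
    proof (rule integral_dominated_convergence[where w="\<lambda>\<omega>. (Z \<omega>)\<^sup>2"])
      show "integrable M (\<lambda>\<omega>. (Z \<omega>)\<^sup>2)" by (rule Z2)
      show "AE x in M. (\<lambda>n. (Z x - Wn n x)\<^sup>2) \<longlonglongrightarrow> 0"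
      proof (rule AE_I2, rule tendsto_eventually)
        fix x
        show "\<forall>\<^sub>F n in sequentially. (Z x - Wn n x)\<^sup>2 = 0"
          unfolding eventually_sequentially
        proof (intro exI allI impI)
          fix n assume "nat \<lceil>\<bar>Z x\<bar>\<rceil> \<le> n"
          then have "\<bar>Z x\<bar> \<le> real n" by linarith
          then show "(Z x - Wn n x)\<^sup>2 = 0" unfolding Wn_def by auto
        qed
      qed
      show "AE x in M. norm ((Z x - Wn n x)\<^sup>2) \<le> (Z x)\<^sup>2" for n
        using Wn_bd(1) by (auto simp: abs_le_square_iff[symmetric])
    qed measurable
    then show ?thesis unfolding \<delta>_def by simp
  qed
  define Ws where "Ws \<omega> = fstar (g (X \<omega>))" for \<omega>
  have [measurable]: "fstar \<in> borel_measurable borel" by (rule borel_measurable_mono[OF assms(9)])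
  have [measurable]: "h \<in> borel_measurable borel"
    by (rule borel_measurable_mono[OF strict_mono_mono[OF assms(7)]])
  have WsF: "Ws \<in> borel_measurable F" unfolding Ws_def assms(8) by measurable
  have WsM[measurable]: "Ws \<in> borel_measurable M" by (rule measurable_from_subalg[OF subalg WsF])
  have A_le: "(\<integral>\<^sup>+\<omega>. ennreal ((Y \<omega> - Ws \<omega>)\<^sup>2) \<partial>M) \<le> ennreal (c + \<delta> n)" for n
    using assms(10)[OF fn_mono[of n]] unfolding Ln Ws_def .
  have YWs2: "integrable M (\<lambda>\<omega>. (Y \<omega> - Ws \<omega>)\<^sup>2)"
    unfolding integrable_iff_bounded
  proof
    show "(\<lambda>\<omega>. (Y \<omega> - Ws \<omega>)\<^sup>2) \<in> borel_measurable M" by measurable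
    have "(\<integral>\<^sup>+\<omega>. ennreal (norm ((Y \<omega> - Ws \<omega>)\<^sup>2)) \<partial>M) = (\<integral>\<^sup>+\<omega>. ennreal ((Y \<omega> - Ws \<omega>)\<^sup>2) \<partial>M)"
      by simp
    also have "\<dots> < \<infinity>" using A_le[of 0] by (simp add: order_le_less_trans)
    finally show "(\<integral>\<^sup>+\<omega>. ennreal (norm ((Y \<omega> - Ws \<omega>)\<^sup>2)) \<partial>M) < \<infinity>" .
  qed
  have Ws2: "integrable M (\<lambda>\<omega>. (Ws \<omega>)\<^sup>2)"
    using L2_diff[OF assms(3) _ assms(4) YWs2] by simp
  define e where "e = (\<integral>\<omega>. (Z \<omega> - Ws \<omega>)\<^sup>2 \<partial>M)"
  have e_nonneg: "0 \<le> e" unfolding e_def by simp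
  have c_nonneg: "0 \<le> c" unfolding c_def by simp
  have \<delta>_nonneg: "0 \<le> \<delta> n" for n unfolding \<delta>_def by simp
  have e_le: "e \<le> \<delta> n" for n
  proof -
    have "ennreal (c + e) \<le> ennreal (c + \<delta> n)"
      using A_le[of n] pyth[OF WsF Ws2] unfolding e_def by simp
    moreover have "0 \<le> c + \<delta> n" using c_nonneg \<delta>_nonneg[of n] by simp
    ultimately have "c + e \<le> c + \<delta> n" using ennreal_le_iff by blast
    then show ?thesis by simp
  qed
  have "e \<le> 0" using LIMSEQ_le_const[OF \<delta>_lim, of e] e_le by blast
  then have "e = 0" using e_nonneg by simp
  moreover have "integrable M (\<lambda>\<omega>. (Z \<omega> - Ws \<omega>)\<^sup>2)" by (rule L2_diff[OF ZM WsM Z2 Ws2])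
  ultimately have "AE \<omega> in M. (Z \<omega> - Ws \<omega>)\<^sup>2 = 0"
    unfolding e_def by (subst (asm) integral_nonneg_eq_0_iff_AE) auto
  then show ?thesis by eventually_elim (simp add: Z_def Ws_def)
qed

end
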